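(* Let $T$ be a c.n.u. contraction on $H$, let $(H_+,H_-,\Gamma_+,\Gamma_-)$ be a boundary quadruple for $A_T^{\perp_s}$ with contractive Weyl function $B$ and $\gamma$-fields $\gamma_\pm$, and let $\varphi_+=pr_1\circ\gamma_+$, $\varphi_-=pr_2\circ\gamma_-$. Then: (1) for $\lambda,\mu\in\mathbb{D}_+$ and $x,y\in H_+$: $(\varphi_+(\lambda)x,\varphi_+(\mu)y)_H=\frac{1}{1-\lambda\bar\mu}((I-B(\mu)^*B(\lambda))x,y)_{H_+}$; (2) for $\lambda,\mu\in\mathbb{D}_-$ and $x,y\in H_-$: $(\varphi_-(\lambda)x,\varphi_-(\mu)y)_H=\frac{1}{1-\lambda\bar\mu}((I-B(\bar\mu)B(\bar\lambda)^* )x,y)_{H_-}$; (3) for $\lambda\in\mathbb{D}_+$, $\mu\in\mathbb{D}_-$, $x\in H_+$, $y\in H_-$: $(\varphi_+(\lambda)x,\varphi_-(\mu)y)_H=\frac{1}{\lambda-\bar\mu}((B(\lambda)-B(\bar\mu))x,y)_{H_-}$, where for $\lambda=\bar\mu$ the right-hand side is understood as its limit.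
   Context: $H$ is an infinite-dimensional separable complex Hilbert space; $T\in\mathbb{B}(H)$, $\|T\|\le1$, is completely non-unitary. $\mathbb{K}=\ker(I-T^*T)$. $\mathbb{H}=H\oplus_\perp H$ with $[(x_1,x_2),(y_1,y_2)]=i(x_1,y_1)_H-i(x_2,y_2)_H$; $S^{\perp_s}=\{a:[a,b]=0\ \forall b\in S\}$; $A_T=\{(x,Tx):x\in\mathbb{K}\}$. $\mathbb{D}_\pm$ are two copies of the open unit disc (coordinates $\lambda$ with $|\lambda|<1$); for $\lambda\in\mathbb{D}_\pm$, $\bar\lambda$ denotes the complex conjugate coordinate, regarded as a point of $\mathbb{D}_\mp$ where appropriate. $N_\lambda=\{(x,\lambda x):x\in H\}\cap A_T^{\perp_s}$ for $\lambda\in\mathbb{D}_+$, $N_\lambda=\{(\lambda x,x):x\in H\}\cap A_T^{\perp_s}$ for $\lambda\in\mathbb{D}_-$. A boundary quadruple for $A_T^{\perp_s}$ is $(H_+,H_-,\Gamma_+,\Gamma_-)$, $H_\pm$ Hilbert spaces, $\Gamma_\pm:A_T^{\perp_s}\to H_\pm$ linear, with $(\Gamma_+,\Gamma_-)$ bounded, surjective onto $H_+\oplus_\perp H_-$, kernel $A_T$, and $[a,b]=i(\Gamma_+a,\Gamma_+b)_{H_+}-i(\Gamma_-a,\Gamma_-b)_{H_-}$. For such a quadruple: for $\lambda\in\mathbb{D}_+$, $\Gamma_+|_{N_\lambda}$ is a bijection onto $H_+$ and there is a unique $B(\lambda)\in\mathbb{B}(H_+,H_-)$ with $\Gamma_-a=B(\lambda)\Gamma_+a$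 for $a\in N_\lambda$; for $\lambda\in\mathbb{D}_-$, $\Gamma_-|_{N_\lambda}$ is a bijection onto $H_-$ and $\Gamma_+a=B(\bar\lambda)^*\Gamma_-a$ for $a\in N_\lambda$. $B$ is holomorphic on $\mathbb{D}_+$ with $\|B(\lambda)\|<1$ (the contractive Weyl function). The $\gamma$-fields are $\gamma_+(\lambda)x\in N_\lambda$ with $\Gamma_+\gamma_+(\lambda)x=x$ ($\lambda\in\mathbb{D}_+$, $x\in H_+$) and $\gamma_-(\lambda)x\in N_\lambda$ with $\Gamma_-\gamma_-(\lambda)x=x$ ($\lambda\in\mathbb{D}_-$, $x\in H_-$). $pr_1,pr_2$ are the projections of $\mathbb{H}$ onto its first and second copy of $H$. *)

theory Defs
  imports "HOL-Analysis.Analysis"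
begin

text \<open>A complex Hilbert space is modelled as a
real Hilbert space (class real_inner + complete_space) with a complex scalar multiplication
extending the real one, multiplication by i being isometric for the real inner product.
The complex inner product (linear in the first, conjugate linear in the second argument)
is then cinner x y = <x,y> + i <x, i y>, and its induced norm is the norm of the class.\<close>

class complex_hilbert = real_inner + complete_space +
  fixes scaleC :: "complex \<Rightarrow> 'a \<Rightarrow> 'a"
  assumes scaleC_add_right: "scaleC c (x + y) = scaleC c x + scaleC c y"
    and scaleC_add_left: "scaleC (c + d) x = scaleC c x + scaleC d x"
    and scaleC_scaleC: "scaleC c (scaleC d x) = scaleC (c * d) x"
    and scaleC_of_real: "scaleC (complex_of_real r) x = scaleR r x"
    and inner_scaleC_ii: "inner (scaleC \<i> x) (scaleC \<i> y) = inner x y"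

definition cinner :: "'a::complex_hilbert \<Rightarrow> 'a \<Rightarrow> complex" where
  "cinner x y = complex_of_real (inner x y) + \<i> * complex_of_real (inner x (scaleC \<i> y))"

definition clinear :: "('a::complex_hilbert \<Rightarrow> 'b::complex_hilbert) \<Rightarrow> bool" where
  "clinear f \<longleftrightarrow> (\<forall>x y. f (x + y) = f x + f y) \<and> (\<forall>c x. f (scaleC c x) = scaleC c (f x))"

definition cbounded :: "('a::complex_hilbert \<Rightarrow> 'b::complex_hilbert) \<Rightarrow> bool" where
  "cbounded f \<longleftrightarrow> clinear f \<and> (\<exists>K. \<forall>x. norm (f x) \<le> K * norm x)"

definition adj :: "('a::complex_hilbert \<Rightarrow> 'b::complex_hilbert) \<Rightarrow> 'b \<Rightarrow> 'a" where
  "adj f = (THE g. \<forall>x y. cinner (f x) y = cinner x (g y))"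

definition csubspace :: "'a::complex_hilbert set \<Rightarrow> bool" where
  "csubspace M \<longleftrightarrow> 0 \<in> M \<and> (\<forall>x\<in>M. \<forall>y\<in>M. x + y \<in> M) \<and> (\<forall>c. \<forall>x\<in>M. scaleC c x \<in> M)"

definition cnu :: "('a::complex_hilbert \<Rightarrow> 'a) \<Rightarrow> bool" where
  "cnu T \<longleftrightarrow> \<not> (\<exists>M. csubspace M \<and> closed M \<and> M \<noteq> {0} \<and> T ` M \<subseteq> M \<and> adj T ` M \<subseteq> M
              \<and> (\<forall>x\<in>M. adj T (T x) = x \<and> T (adj T x) = x))"

definition separable_space :: "'a::topological_space itself \<Rightarrow> bool" where
  "separable_space _ \<longleftrightarrow> (\<exists>D::'a set. countable D \<and> closure D = UNIV)"

definition infinite_dimensional :: "'a::complex_hilbert itself \<Rightarrow> bool" where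
  "infinite_dimensional _ \<longleftrightarrow> (\<exists>S::'a set. infinite S \<and> independent S)"

text \<open>The space H (+) H is modelled as the product type 'h \<times> 'h.\<close>

definition KK :: "('h::complex_hilbert \<Rightarrow> 'h) \<Rightarrow> 'h set" where
  "KK T = {x. x - adj T (T x) = 0}"

definition AT :: "('h::complex_hilbert \<Rightarrow> 'h) \<Rightarrow> ('h \<times> 'h) set" where
  "AT T = {(x, T x) | x. x \<in> KK T}"

definition symp :: "'h::complex_hilbert \<times> 'h \<Rightarrow> 'h \<times> 'h \<Rightarrow> complex" where
  "symp a b = \<i> * cinner (fst a) (fst b) - \<i> * cinner (snd a) (snd b)"

definition sperp :: "('h::complex_hilbert \<times> 'h) set \<Rightarrow> ('h \<times> 'h) set" where
  "sperp S = {a. \<forall>b\<in>S. symp a b = 0}"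

definition scaleC2 :: "complex \<Rightarrow> 'h::complex_hilbert \<times> 'h \<Rightarrow> 'h \<times> 'h" where
  "scaleC2 c a = (scaleC c (fst a), scaleC c (snd a))"

definition Nplus :: "('h::complex_hilbert \<Rightarrow> 'h) \<Rightarrow> complex \<Rightarrow> ('h \<times> 'h) set" where
  "Nplus T l = {(x, scaleC l x) | x. True} \<inter> sperp (AT T)"

definition Nminus :: "('h::complex_hilbert \<Rightarrow> 'h) \<Rightarrow> complex \<Rightarrow> ('h \<times> 'h) set" where
  "Nminus T l = {(scaleC l x, x) | x. True} \<inter> sperp (AT T)"

definition boundary_quadruple ::
  "('h::complex_hilbert \<Rightarrow> 'h) \<Rightarrow> ('h \<times> 'h \<Rightarrow> 'p::complex_hilbert) \<Rightarrow> ('h \<times> 'h \<Rightarrow> 'm::complex_hilbert) \<Rightarrow> bool" where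
  "boundary_quadruple T Gp Gm \<longleftrightarrow>
     (let W = sperp (AT T) in
       (\<forall>a\<in>W. \<forall>b\<in>W. Gp (a + b) = Gp a + Gp b \<and> Gm (a + b) = Gm a + Gm b)
     \<and> (\<forall>c. \<forall>a\<in>W. Gp (scaleC2 c a) = scaleC c (Gp a) \<and> Gm (scaleC2 c a) = scaleC c (Gm a))
     \<and> (\<exists>K. \<forall>a\<in>W. norm (Gp a, Gm a) \<le> K * norm a)
     \<and> (\<forall>u v. \<exists>a\<in>W. Gp a = u \<and> Gm a = v)
     \<and> {a\<in>W. Gp a = 0 \<and> Gm a = 0} = AT T
     \<and> (\<forall>a\<in>W. \<forall>b\<in>W. symp a b = \<i> * cinner (Gp a) (Gp b) - \<i> * cinner (Gm a) (Gm b)))"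

end

theory Submission
  imports Defs
begin


lemma scaleC_zero_left[simp]: "scaleC 0 (x::'a::complex_hilbert) = 0"
  using scaleC_of_real[of 0 x] by simp
lemma scaleC_one[simp]: "scaleC 1 (x::'a::complex_hilbert) = x"
  using scaleC_of_real[of 1 x] by simp
lemma scaleC_m1: "scaleC (-1) (x::'a::complex_hilbert) = - x"
  using scaleC_of_real[of "-1" x] by simp
lemma scaleC_minus_left: "scaleC (-c) (x::'a::complex_hilbert) = - scaleC c x"
  using scaleC_scaleC[of "-1" c x] by (simp add: scaleC_m1)
lemma scaleC_minus_right: "scaleC c (- x::'a::complex_hilbert) = - scaleC c x"
  using scaleC_scaleC[of c "-1" x] scaleC_scaleC[of "-1" c x] by (simp add: scaleC_m1)
lemma scaleC_diff_right: "scaleC c (x - y::'a::complex_hilbert) = scaleC c x - scaleC c y"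
  by (simp only: diff_conv_add_uminus scaleC_add_right scaleC_minus_right)
lemma scaleC_diff_left: "scaleC (c - d) (x::'a::complex_hilbert) = scaleC c x - scaleC d x"
  by (simp only: diff_conv_add_uminus scaleC_add_left scaleC_minus_left)
lemma inner_ii_swap: "inner (scaleC \<i> x) (y::'a::complex_hilbert) = - inner x (scaleC \<i> y)"
proof -
  have "inner (scaleC \<i> x) y = inner (scaleC \<i> (scaleC \<i> x)) (scaleC \<i> y)"
    by (simp add: inner_scaleC_ii)
  also have "scaleC \<i> (scaleC \<i> x) = - x" by (simp add: scaleC_scaleC scaleC_m1)
  finally show ?thesis by simp
qed
lemma inner_x_ix[simp]: "inner x (scaleC \<i> (x::'a::complex_hilbert)) = 0"
  using inner_ii_swap[of x x] by (simp add: inner_commute)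
lemma scaleC_decomp: "scaleC c (x::'a::complex_hilbert) = Re c *\<^sub>R x + Im c *\<^sub>R scaleC \<i> x"
proof -
  have "c = complex_of_real (Re c) + complex_of_real (Im c) * \<i>" by (simp add: complex_eq_iff)
  then have "scaleC c x = scaleC (complex_of_real (Re c)) x + scaleC (complex_of_real (Im c)) (scaleC \<i> x)"
    by (metis (no_types) scaleC_add_left scaleC_scaleC)
  then show ?thesis by (simp add: scaleC_of_real)
qed
lemma cinner_add_left: "cinner (x + y) (z::'a::complex_hilbert) = cinner x z + cinner y z"
  by (simp add: cinner_def inner_add_left algebra_simps)
lemma cinner_scaleR_left: "cinner (r *\<^sub>R x) (z::'a::complex_hilbert) = of_real r * cinner x z"
  by (simp add: cinner_def algebra_simps)
lemma cinner_ii_left: "cinner (scaleC \<i> x) (z::'a::complex_hilbert) = \<i> * cinner x z"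
  by (simp add: cinner_def inner_ii_swap inner_scaleC_ii scaleC_scaleC scaleC_m1 algebra_simps)
lemma cinner_scaleC_left: "cinner (scaleC c x) (z::'a::complex_hilbert) = c * cinner x z"
proof -
  have "cinner (scaleC c x) z = of_real (Re c) * cinner x z + of_real (Im c) * (\<i> * cinner x z)"
    by (subst scaleC_decomp) (simp add: cinner_add_left cinner_scaleR_left cinner_ii_left)
  also have "\<dots> = (of_real (Re c) + \<i> * of_real (Im c)) * cinner x z" by (simp add: algebra_simps)
  also have "of_real (Re c) + \<i> * of_real (Im c) = c" by (simp add: complex_eq_iff)
  finally show ?thesis .
qed
lemma cinner_commute: "cinner y (x::'a::complex_hilbert) = cnj (cinner x y)"
proof -
  have "inner y (scaleC \<i> x) = - inner x (scaleC \<i> y)"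
    by (simp add: inner_commute[of y] inner_ii_swap)
  then show ?thesis by (simp add: cinner_def complex_eq_iff inner_commute)
qed
lemma cinner_add_right: "cinner z (x + y::'a::complex_hilbert) = cinner z x + cinner z y"
  by (subst (1 2 3) cinner_commute) (simp add: cinner_add_left)
lemma cinner_scaleC_right: "cinner z (scaleC c x::'a::complex_hilbert) = cnj c * cinner z x"
  by (subst (1 2) cinner_commute) (simp add: cinner_scaleC_left)
lemma cinner_minus_left: "cinner (- x) (z::'a::complex_hilbert) = - cinner x z"
  by (simp add: cinner_def)
lemma cinner_minus_right: "cinner z (- x::'a::complex_hilbert) = - cinner z x"
  by (subst (1 2) cinner_commute) (simp add: cinner_minus_left)
lemma cinner_diff_left: "cinner (x - y) (z::'a::complex_hilbert) = cinner x z - cinner y z"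
  by (simp only: diff_conv_add_uminus cinner_add_left cinner_minus_left)
lemma cinner_diff_right: "cinner z (x - y::'a::complex_hilbert) = cinner z x - cinner z y"
  by (simp only: diff_conv_add_uminus cinner_add_right cinner_minus_right)
lemma cinner_self: "cinner x (x::'a::complex_hilbert) = of_real ((norm x)\<^sup>2)"
  by (simp add: cinner_def power2_norm_eq_inner)
lemma norm_scaleC: "norm (scaleC c (x::'a::complex_hilbert)) = cmod c * norm x"
proof -
  have "of_real ((norm (scaleC c x))\<^sup>2) = cinner (scaleC c x) (scaleC c x)"
    by (simp only: cinner_self)
  also have "\<dots> = c * cnj c * cinner x x"
    by (simp add: cinner_scaleC_left cinner_scaleC_right)
  also have "\<dots> = of_real ((cmod c * norm x)\<^sup>2)"
    by (simp add: cinner_self complex_norm_square[symmetric] power_mult_distrib)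
  finally have "(norm (scaleC c x))\<^sup>2 = (cmod c * norm x)\<^sup>2" using of_real_eq_iff by blast
  then show ?thesis by (simp add: power2_eq_iff_nonneg)
qed
lemma cinner_zero_iff: "cinner x (x::'a::complex_hilbert) = 0 \<longleftrightarrow> x = 0"
  by (simp add: cinner_self)
lemma adj_eq:
  assumes "\<forall>x z. cinner (f x) z = cinner x (g z)"
  shows "adj f = g"
  unfolding adj_def
proof (rule the_equality)
  fix g' assume h: "\<forall>x y. cinner (f x) y = cinner x (g' y)"
  show "g' = g"
  proof
    fix z
    have "cinner (g' z - g z) (g' z - g z) = 0"
      using h assms by (simp add: cinner_diff_right cinner_diff_left)
    then show "g' z = g z" by (simp add: cinner_zero_iff)
  qed
qed (use assms in blast)
lemma cinner_norm_le: "cmod (cinner x (y::'a::complex_hilbert)) \<le> 2 * norm x * norm y"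
proof -
  have "cmod (cinner x y) \<le> \<bar>inner x y\<bar> + \<bar>inner x (scaleC \<i> y)\<bar>"
    unfolding cinner_def
  proof (rule order_trans[OF norm_triangle_ineq])
    show "cmod (complex_of_real (inner x y)) + cmod (\<i> * complex_of_real (inner x (scaleC \<i> y)))
      \<le> \<bar>inner x y\<bar> + \<bar>inner x (scaleC \<i> y)\<bar>"
      by (simp only: norm_mult norm_ii norm_of_real mult_1)
  qed
  also have "\<dots> \<le> norm x * norm y + norm x * norm (scaleC \<i> y)"
    by (intro add_mono Cauchy_Schwarz_ineq2)
  also have "norm (scaleC \<i> y) = norm y" by (simp only: norm_scaleC norm_ii mult_1)
  finally show ?thesis by linarith
qed


lemma symp_add_left: "symp (a + b) k = symp a k + symp (b::'h::complex_hilbert \<times> 'h) k"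
  by (simp add: symp_def cinner_add_left algebra_simps)
lemma symp_scale_left: "symp (scaleC2 c a) k = c * symp (a::'h::complex_hilbert \<times> 'h) k"
  by (simp add: symp_def scaleC2_def cinner_scaleC_left algebra_simps)
lemma sperp_add: "a \<in> sperp S \<Longrightarrow> b \<in> sperp S \<Longrightarrow> a + b \<in> sperp (S::('h::complex_hilbert \<times> 'h) set)"
  by (simp add: sperp_def symp_add_left)
lemma sperp_scale: "a \<in> sperp S \<Longrightarrow> scaleC2 c a \<in> sperp (S::('h::complex_hilbert \<times> 'h) set)"
  by (simp add: sperp_def symp_scale_left)
lemma ii_cancel: "\<i> * a - \<i> * b = 0 \<Longrightarrow> a = (b::complex)"
  by (simp add: right_diff_distrib[symmetric])
lemma solve_eq: "\<i> * (k * w) = \<i> * a - \<i> * b \<Longrightarrow> k \<noteq> 0 \<Longrightarrow> w = (a - b) / (k::complex)"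
  by (simp add: right_diff_distrib[symmetric] eq_divide_eq mult.commute)

lemma ball_cnj: "m \<in> ball (0::complex) 1 \<Longrightarrow> cnj m \<in> ball 0 1"
  by simp
lemma one_minus_nz: "l \<in> ball (0::complex) 1 \<Longrightarrow> m \<in> ball 0 1 \<Longrightarrow> 1 - l * cnj m \<noteq> 0"
proof
  assume l: "l \<in> ball (0::complex) 1" and m: "m \<in> ball 0 1" and e: "1 - l * cnj m = 0"
  have "cmod l < 1" "cmod m < 1" using l m by auto
  then have "cmod l * cmod m < 1 * 1"
    by (intro mult_strict_mono') auto
  then have "cmod (l * cnj m) < 1" by (simp add: norm_mult)
  moreover have "l * cnj m = 1" using e by simp
  ultimately show False by simp
qed

theorem proposition4p12:
  fixes T :: "'h::complex_hilbert \<Rightarrow> 'h"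
    and Gp :: "'h \<times> 'h \<Rightarrow> 'p::complex_hilbert"
    and Gm :: "'h \<times> 'h \<Rightarrow> 'm::complex_hilbert"
    and B :: "complex \<Rightarrow> 'p \<Rightarrow> 'm"
    and gp :: "complex \<Rightarrow> 'p \<Rightarrow> 'h \<times> 'h"
    and gm :: "complex \<Rightarrow> 'm \<Rightarrow> 'h \<times> 'h"
  assumes sep: "separable_space TYPE('h)"
    and infdim: "infinite_dimensional TYPE('h)"
    and T_bdd: "cbounded T"
    and T_contr: "\<forall>x. norm (T x) \<le> norm x"
    and T_cnu: "cnu T"
    and bq: "boundary_quadruple T Gp Gm"
    and B_weyl: "\<forall>l\<in>ball 0 1. \<forall>a\<in>Nplus T l. Gm a = B l (Gp a)"
    and gp_field: "\<forall>l\<in>ball 0 1. \<forall>x. gp l x \<in> Nplus T l \<and> Gp (gp l x) = x"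
    and gm_field: "\<forall>l\<in>ball 0 1. \<forall>x. gm l x \<in> Nminus T l \<and> Gm (gm l x) = x"
  shows
    "(\<forall>l\<in>ball 0 1. \<forall>m\<in>ball 0 1. \<forall>x y.
        cinner (fst (gp l x)) (fst (gp m y))
          = cinner (x - adj (B m) (B l x)) y / (1 - l * cnj m))
   \<and> (\<forall>l\<in>ball 0 1. \<forall>m\<in>ball 0 1. \<forall>x y.
        cinner (snd (gm l x)) (snd (gm m y))
          = cinner (x - B (cnj m) (adj (B (cnj l)) x)) y / (1 - l * cnj m))
   \<and> (\<forall>l\<in>ball 0 1. \<forall>m\<in>ball 0 1. \<forall>x y.
        (l \<noteq> cnj m \<longrightarrow>
           cinner (fst (gp l x)) (snd (gm m y)) = cinner (B l x - B (cnj m) x) y / (l - cnj m))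
      \<and> (l = cnj m \<longrightarrow>
           ((\<lambda>n. cinner (B l x - B n x) y / (l - n)) \<longlongrightarrow> cinner (fst (gp l x)) (snd (gm m y))) (at l)))"
proof -
  define W where "W = sperp (AT T)"
  from bq have add: "\<forall>a\<in>W. \<forall>b\<in>W. Gp (a + b) = Gp a + Gp b \<and> Gm (a + b) = Gm a + Gm b"
    and scl: "\<forall>c. \<forall>a\<in>W. Gp (scaleC2 c a) = scaleC c (Gp a) \<and> Gm (scaleC2 c a) = scaleC c (Gm a)"
    and sy: "\<forall>a\<in>W. \<forall>b\<in>W. symp a b = \<i> * cinner (Gp a) (Gp b) - \<i> * cinner (Gm a) (Gm b)"
    unfolding boundary_quadruple_def W_def Let_def by auto
  have gpW: "gp l x \<in> W" and gp_snd: "snd (gp l x) = scaleC l (fst (gp l x))"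
    and Gpgp: "Gp (gp l x) = x" and Bgp: "Gm (gp l x) = B l x" if "l \<in> ball 0 1" for l x
  proof -
    have h: "gp l x \<in> Nplus T l" "Gp (gp l x) = x" using gp_field that by auto
    then show "gp l x \<in> W" "Gp (gp l x) = x" unfolding Nplus_def W_def by auto
    from h show "snd (gp l x) = scaleC l (fst (gp l x))" unfolding Nplus_def by auto
    show "Gm (gp l x) = B l x" using B_weyl that h by auto
  qed
  have gmW: "gm l x \<in> W" and gm_fst: "fst (gm l x) = scaleC l (snd (gm l x))"
    and Gmgm: "Gm (gm l x) = x" if "l \<in> ball 0 1" for l x
  proof -
    have h: "gm l x \<in> Nminus T l" "Gm (gm l x) = x" using gm_field that by auto
    then show "gm l x \<in> W" "Gm (gm l x) = x" unfolding Nminus_def W_def by auto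
    from h show "fst (gm l x) = scaleC l (snd (gm l x))" unfolding Nminus_def by auto
  qed
  have adjB: "adj (B m) = (\<lambda>z. Gp (gm (cnj m) z))" if m: "m \<in> ball 0 1" for m
  proof (rule adj_eq, intro allI)
    fix x z
    have cm: "cnj m \<in> ball 0 1" using m by simp
    have "symp (gp m x) (gm (cnj m) z) = 0"
      using gp_snd[OF m] gm_fst[OF cm]
      by (simp add: symp_def cinner_scaleC_left cinner_scaleC_right)
    moreover have "symp (gp m x) (gm (cnj m) z) = \<i> * cinner x (Gp (gm (cnj m) z)) - \<i> * cinner (B m x) z"
      using sy gpW[OF m] gmW[OF cm] Gpgp[OF m] Bgp[OF m] Gmgm[OF cm] by auto
    ultimately show "cinner (B m x) z = cinner x (Gp (gm (cnj m) z))"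
      by (metis ii_cancel)
  qed
  have adjP: "cinner (B m x) z = cinner x (adj (B m) z)" if m: "m \<in> ball 0 1" for m x z
  proof -
    have cm: "cnj m \<in> ball 0 1" using m by simp
    have "symp (gp m x) (gm (cnj m) z) = 0"
      using gp_snd[OF m] gm_fst[OF cm]
      by (simp add: symp_def cinner_scaleC_left cinner_scaleC_right)
    moreover have "symp (gp m x) (gm (cnj m) z) = \<i> * cinner x (Gp (gm (cnj m) z)) - \<i> * cinner (B m x) z"
      using sy gpW[OF m] gmW[OF cm] Gpgp[OF m] Bgp[OF m] Gmgm[OF cm] by auto
    ultimately show ?thesis using adjB[OF m]
      by (metis ii_cancel)
  qed
  have GpGm: "Gp (gm l x) = adj (B (cnj l)) x" if l: "l \<in> ball 0 1" for l x
    using adjB[of "cnj l"] l by simp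
  have P1: "cinner (fst (gp l x)) (fst (gp m y)) = cinner (x - adj (B m) (B l x)) y / (1 - l * cnj m)"
    if l: "l \<in> ball 0 1" and m: "m \<in> ball 0 1" for l m x y
  proof -
    have "symp (gp l x) (gp m y) = \<i> * ((1 - l * cnj m) * cinner (fst (gp l x)) (fst (gp m y)))"
      using gp_snd[OF l] gp_snd[OF m]
      by (simp add: symp_def cinner_scaleC_left cinner_scaleC_right algebra_simps)
    moreover have "symp (gp l x) (gp m y) = \<i> * cinner x y - \<i> * cinner (B l x) (B m y)"
      using sy gpW[OF l] gpW[OF m] Gpgp[OF l] Gpgp[OF m] Bgp[OF l] Bgp[OF m] by auto
    moreover have "cinner (B l x) (B m y) = cinner (adj (B m) (B l x)) y"
      using adjP[OF m, of y "B l x"] by (metis cinner_commute)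
    ultimately show ?thesis
      using one_minus_nz[OF l m] by (simp add: cinner_diff_left solve_eq)
  qed
  have P2: "cinner (snd (gm l x)) (snd (gm m y)) = cinner (x - B (cnj m) (adj (B (cnj l)) x)) y / (1 - l * cnj m)"
    if l: "l \<in> ball 0 1" and m: "m \<in> ball 0 1" for l m x y
  proof -
    have "symp (gm l x) (gm m y) = - (\<i> * ((1 - l * cnj m) * cinner (snd (gm l x)) (snd (gm m y))))"
      using gm_fst[OF l] gm_fst[OF m]
      by (simp add: symp_def cinner_scaleC_left cinner_scaleC_right algebra_simps)
    moreover have "symp (gm l x) (gm m y) = \<i> * cinner (adj (B (cnj l)) x) (adj (B (cnj m)) y) - \<i> * cinner x y"
      using sy gmW[OF l] gmW[OF m] Gmgm[OF l] Gmgm[OF m] GpGm[OF l] GpGm[OF m] by auto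
    moreover have "cinner (adj (B (cnj l)) x) (adj (B (cnj m)) y) = cinner (B (cnj m) (adj (B (cnj l)) x)) y"
      using adjP[OF ball_cnj[OF m]] by metis
    ultimately have "\<i> * ((1 - l * cnj m) * cinner (snd (gm l x)) (snd (gm m y)))
        = \<i> * cinner x y - \<i> * cinner (B (cnj m) (adj (B (cnj l)) x)) y"
      by (simp add: algebra_simps)
    then show ?thesis
      using one_minus_nz[OF l m] by (simp add: cinner_diff_left solve_eq)
  qed
  have P3: "cinner (fst (gp l x)) (snd (gm m y)) = cinner (B l x - B (cnj m) x) y / (l - cnj m)"
    if l: "l \<in> ball 0 1" and m: "m \<in> ball 0 1" and ne: "l \<noteq> cnj m" for l m x y
  proof -
    have "symp (gp l x) (gm m y) = - (\<i> * ((l - cnj m) * cinner (fst (gp l x)) (snd (gm m y))))"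
      using gp_snd[OF l] gm_fst[OF m]
      by (simp add: symp_def cinner_scaleC_left cinner_scaleC_right algebra_simps)
    moreover have "symp (gp l x) (gm m y) = \<i> * cinner x (adj (B (cnj m)) y) - \<i> * cinner (B l x) y"
      using sy gpW[OF l] gmW[OF m] Gpgp[OF l] Bgp[OF l] Gmgm[OF m] GpGm[OF m] by auto
    moreover have "cinner x (adj (B (cnj m)) y) = cinner (B (cnj m) x) y"
      using adjP[OF ball_cnj[OF m]] by metis
    ultimately have "\<i> * ((l - cnj m) * cinner (fst (gp l x)) (snd (gm m y)))
        = \<i> * cinner (B l x) y - \<i> * cinner (B (cnj m) x) y"
      by (simp add: algebra_simps)
    then show ?thesis
      using ne by (simp add: cinner_diff_left solve_eq)
  qed
  have vbound: "norm (snd (gm n y) - snd (gm n' y)) * (1 - cmod n) \<le> cmod (n - n') * norm (snd (gm n' y))"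
    if n: "n \<in> ball 0 1" and n': "n' \<in> ball 0 1" for n n' y
  proof -
    define a where "a = gm n y"
    define b where "b = gm n' y"
    define c where "c = a + scaleC2 (-1) b"
    have aW: "a \<in> W" and bW: "b \<in> W" using gmW n n' a_def b_def by auto
    have bW': "scaleC2 (-1) b \<in> W" using bW sperp_scale unfolding W_def by blast
    have cW: "c \<in> W" using aW bW' sperp_add unfolding W_def c_def by blast
    have "Gm c = Gm a + scaleC (-1) (Gm b)" using add aW bW' scl bW c_def by auto
    also have "\<dots> = 0" using Gmgm n n' a_def b_def by (simp add: scaleC_m1)
    finally have Gmc: "Gm c = 0" .
    have fc: "fst c = fst a - fst b" and sc: "snd c = snd a - snd b"
      by (simp_all add: c_def scaleC2_def scaleC_m1)
    have "symp c c = \<i> * cinner (Gp c) (Gp c)" using sy cW Gmc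
      by (simp add: cinner_self)
    moreover have "symp c c = \<i> * cinner (fst c) (fst c) - \<i> * cinner (snd c) (snd c)"
      by (simp add: symp_def)
    ultimately have "\<i> * cinner (fst c) (fst c) = \<i> * (cinner (snd c) (snd c) + cinner (Gp c) (Gp c))"
      by (simp add: algebra_simps)
    then have "cinner (snd c) (snd c) = cinner (fst c) (fst c) - cinner (Gp c) (Gp c)"
      by simp
    then have "(norm (snd c))\<^sup>2 = (norm (fst c))\<^sup>2 - (norm (Gp c))\<^sup>2"
      unfolding cinner_self by (metis of_real_diff of_real_eq_iff)
    then have "(norm (snd c))\<^sup>2 \<le> (norm (fst c))\<^sup>2" by simp
    then have le1: "norm (snd c) \<le> norm (fst c)" by (simp add: power2_le_iff_abs_le)
    have "fst c = scaleC n (snd a - snd b) + scaleC (n - n') (snd b)"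
      using fc gm_fst n n' a_def b_def by (simp add: scaleC_diff_right scaleC_diff_left)
    then have "norm (fst c) \<le> cmod n * norm (snd a - snd b) + cmod (n - n') * norm (snd b)"
      by (metis norm_scaleC norm_triangle_ineq)
    with le1 sc have "norm (snd a - snd b) \<le> cmod n * norm (snd a - snd b) + cmod (n - n') * norm (snd b)"
      by simp
    then show ?thesis unfolding a_def b_def by (simp add: algebra_simps)
  qed
  have P4: "((\<lambda>n. cinner (B l x - B n x) y / (l - n)) \<longlongrightarrow> cinner (fst (gp l x)) (snd (gm m y))) (at l)"
    if l: "l \<in> ball 0 1" and m: "m \<in> ball 0 1" and eq: "l = cnj m" for l m x y
  proof -
    define u where "u = fst (gp l x)"
    define v where "v = (\<lambda>n. snd (gm (cnj n) y))"
    have vl: "v l = snd (gm m y)" using eq v_def by simp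
    have ev: "eventually (\<lambda>n. n \<in> ball 0 1 - {l}) (at l)"
      using eventually_at_in_open[OF open_ball l] .
    have "((\<lambda>n. cinner u (v n) - cinner u (v l)) \<longlongrightarrow> 0) (at l)"
    proof (rule Lim_null_comparison)
      show "eventually (\<lambda>n. norm (cinner u (v n) - cinner u (v l))
          \<le> 2 * norm u * (cmod (n - l) * norm (v l) / (1 - cmod n))) (at l)"
        using ev
      proof (rule eventually_mono)
        fix n assume "n \<in> ball 0 1 - {l}"
        then have n: "n \<in> ball 0 1" by simp
        have cn: "cnj n \<in> ball 0 1" "cnj l \<in> ball 0 1" using n l by auto
        have pos: "1 - cmod n > 0" using n by simp
        have "norm (v n - v l) * (1 - cmod n) \<le> cmod (n - l) * norm (v l)"
          using vbound[OF cn, of y] unfolding v_def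
          by (metis complex_cnj_diff complex_mod_cnj)
        then have b1: "norm (v n - v l) \<le> cmod (n - l) * norm (v l) / (1 - cmod n)"
          using pos by (simp add: pos_le_divide_eq)
        have "norm (cinner u (v n) - cinner u (v l)) = cmod (cinner u (v n - v l))"
          by (simp add: cinner_diff_right)
        also have "\<dots> \<le> 2 * norm u * norm (v n - v l)" by (rule cinner_norm_le)
        also have "\<dots> \<le> 2 * norm u * (cmod (n - l) * norm (v l) / (1 - cmod n))"
          using b1 by (intro mult_left_mono) auto
        finally show "norm (cinner u (v n) - cinner u (v l))
          \<le> 2 * norm u * (cmod (n - l) * norm (v l) / (1 - cmod n))" .
      qed
      have "((\<lambda>n. 2 * norm u * (cmod (n - l) * norm (v l) / (1 - cmod n)))
          \<longlongrightarrow> 2 * norm u * (cmod (l - l) * norm (v l) / (1 - cmod l))) (at l)"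
        using l by (intro tendsto_intros) auto
      then show "((\<lambda>n. 2 * norm u * (cmod (n - l) * norm (v l) / (1 - cmod n))) \<longlongrightarrow> 0) (at l)"
        by simp
    qed
    then have lim: "((\<lambda>n. cinner u (v n)) \<longlongrightarrow> cinner u (v l)) (at l)"
      by (simp add: Lim_null[symmetric])
    have "eventually (\<lambda>n. cinner (B l x - B n x) y / (l - n) = cinner u (v n)) (at l)"
      using ev
    proof (rule eventually_mono)
      fix n assume "n \<in> ball 0 1 - {l}"
      then have n: "cnj n \<in> ball 0 1" and ne: "l \<noteq> cnj (cnj n)" by auto
      show "cinner (B l x - B n x) y / (l - n) = cinner u (v n)"
        using P3[OF l n ne, of x y] unfolding u_def v_def by simp
    qed
    then show ?thesis using lim vl unfolding u_def by (simp add: tendsto_cong)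
  qed
  show ?thesis
    using P1 P2 P3 P4 by blast
qed

end
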